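(* Let $\mathcal E$ be an evolution algebra of a "chicken" population (EACP) over a field $K$ with natural basis $\{h_1,\dots,h_n,r\}$ and matrix of structural constants $M=A\oplus \mathbf b$, where $A=(a_{ij})_{i,j=1}^n$ and $\mathbf b=(b_1,\dots,b_n)^T$. Then for every $m\geq 1$ and every $i=1,\dots,n$: \begin{itemize} \item[(i)] $R_r^m(h_i)=(A^m\mathbf h)_i+(A^{m-1}\mathbf b)_i\, r$; \item[(ii)] $(h_ir)^{[m]}=\gamma_m\left[(A^{m+1}\mathbf h)_i+(A^{m}\mathbf b)_i\, r\right]$, where the scalars $\gamma_m$ (depending on $i$) are defined recursively by $\gamma_1=2b_i$ and $\gamma_{m+1}=2\gamma_m^2\,(A^m\mathbf b)_i$. \end{itemize}
   Context: An EACP over a field $K$ is a $K$-algebra $\mathcal E$ with a basis $\{h_1,\dots,h_n,r\}$ (a natural basis) such that $h_ir=rh_i=\sum_{j=1}^n a_{ij}h_j+b_ir$, $h_ih_j=0$ for all $i,j=1,\dots,n$, and $rr=0$. Write $A^m=(a^{(m)}_{ij})$ for the $m$-th power of $A$ (with $A^0$ the identity matrix), $(A^m\mathbf h)_i=\sum_{j=1}^n a^{(m)}_{ij}h_j$, and $(A^m\mathbf b)_i=\sum_{j=1}^n a^{(m)}_{ij}b_j$. The right multiplication operator is $R_r(x)=xr$, and $R_r^m$ is its $m$-fold iterate. Plenary powers are defined by $a^{[1]}=a\cdot a$ and $a^{[m]}=a^{[m-1]}a^{[m-1]}$ for $m\geq 2$. *)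

theory Defs
  imports Complex_Main
begin

fun matpow :: "nat \<Rightarrow> (nat \<Rightarrow> nat \<Rightarrow> 'k::field) \<Rightarrow> nat \<Rightarrow> nat \<Rightarrow> nat \<Rightarrow> 'k" where
  "matpow n A 0 = (\<lambda>i j. if i = j then 1 else 0)"
| "matpow n A (Suc m) = (\<lambda>i j. \<Sum>k = 1..n. matpow n A m i k * A k j)"

definition matpow_vec :: "('k::field \<Rightarrow> 'e \<Rightarrow> 'e) \<Rightarrow> nat \<Rightarrow> (nat \<Rightarrow> nat \<Rightarrow> 'k)
    \<Rightarrow> nat \<Rightarrow> (nat \<Rightarrow> 'e) \<Rightarrow> nat \<Rightarrow> 'e::ab_group_add" where
  "matpow_vec scale n A m h i = (\<Sum>j = 1..n. scale (matpow n A m i j) (h j))"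

definition matpow_scal :: "nat \<Rightarrow> (nat \<Rightarrow> nat \<Rightarrow> 'k::field) \<Rightarrow> nat \<Rightarrow> (nat \<Rightarrow> 'k) \<Rightarrow> nat \<Rightarrow> 'k" where
  "matpow_scal n A m b i = (\<Sum>j = 1..n. matpow n A m i j * b j)"

text \<open>Plenary powers: plenary mult a m = a^[m] for m \<ge> 1
  (plenary mult a 0 = a, a^[1] = a a, a^[m] = a^[m-1] a^[m-1]).\<close>
fun plenary :: "('e \<Rightarrow> 'e \<Rightarrow> 'e) \<Rightarrow> 'e \<Rightarrow> nat \<Rightarrow> 'e" where
  "plenary mult a 0 = a"
| "plenary mult a (Suc m) = mult (plenary mult a m) (plenary mult a m)"

fun gamma :: "nat \<Rightarrow> (nat \<Rightarrow> nat \<Rightarrow> 'k::field) \<Rightarrow> (nat \<Rightarrow> 'k) \<Rightarrow> nat \<Rightarrow> nat \<Rightarrow> 'k" where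
  "gamma n A b i 0 = 0"
| "gamma n A b i (Suc 0) = 2 * b i"
| "gamma n A b i (Suc (Suc m)) =
     2 * (gamma n A b i (Suc m))\<^sup>2 * matpow_scal n A (Suc m) b i"

definition bilinear_mult :: "('k \<Rightarrow> 'e \<Rightarrow> 'e) \<Rightarrow> ('e \<Rightarrow> 'e \<Rightarrow> 'e::ab_group_add) \<Rightarrow> bool" where
  "bilinear_mult scale mult \<longleftrightarrow>
     (\<forall>x y z. mult (x + y) z = mult x z + mult y z) \<and>
     (\<forall>x y z. mult x (y + z) = mult x y + mult x z) \<and>
     (\<forall>c x y. mult (scale c x) y = scale c (mult x y)) \<and>
     (\<forall>c x y. mult x (scale c y) = scale c (mult x y))"

end

theory Submission
  imports Defs
begin

theorem proposition3p1:
  fixes scale :: "'k::field \<Rightarrow> 'e::ab_group_add \<Rightarrow> 'e"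
    and mult :: "'e \<Rightarrow> 'e \<Rightarrow> 'e"
    and n :: nat
    and h :: "nat \<Rightarrow> 'e" and r :: 'e
    and A :: "nat \<Rightarrow> nat \<Rightarrow> 'k" and b :: "nat \<Rightarrow> 'k"
  assumes vs: "vector_space scale"
    and bil: "bilinear_mult scale mult"
    and inj_h: "inj_on h {1..n}" and r_notin: "r \<notin> h ` {1..n}"
    and indep: "\<not> module.dependent scale (insert r (h ` {1..n}))"
    and span: "module.span scale (insert r (h ` {1..n})) = UNIV"
    and hr: "\<And>i. i \<in> {1..n} \<Longrightarrow>
               mult (h i) r = (\<Sum>j = 1..n. scale (A i j) (h j)) + scale (b i) r"
    and rh: "\<And>i. i \<in> {1..n} \<Longrightarrow>
               mult r (h i) = (\<Sum>j = 1..n. scale (A i j) (h j)) + scale (b i) r"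
    and hh: "\<And>i j. i \<in> {1..n} \<Longrightarrow> j \<in> {1..n} \<Longrightarrow> mult (h i) (h j) = 0"
    and rr: "mult r r = 0"
  shows "\<forall>m \<ge> 1. \<forall>i \<in> {1..n}.
           ((\<lambda>x. mult x r) ^^ m) (h i)
             = matpow_vec scale n A m h i + scale (matpow_scal n A (m - 1) b i) r
         \<and> plenary mult (mult (h i) r) m
             = scale (gamma n A b i m)
                 (matpow_vec scale n A (m + 1) h i + scale (matpow_scal n A m b i) r)"
proof -
  interpret vs: vector_space scale by (rule vs)
  have addL: "\<And>x y z. mult (x + y) z = mult x z + mult y z"
    and addR: "\<And>x y z. mult x (y + z) = mult x y + mult x z"
    and scL: "\<And>c x y. mult (scale c x) y = scale c (mult x y)"
    and scR: "\<And>c x y. mult x (scale c y) = scale c (mult x y)"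
    using bil unfolding bilinear_mult_def by blast+
  have m0L: "mult 0 z = 0" for z using addL[of 0 0 z] by simp
  have m0R: "mult z 0 = 0" for z using addR[of z 0 0] by simp
  have sumL: "mult (\<Sum>j\<in>S. f j) z = (\<Sum>j\<in>S. mult (f j) z)" for S :: "nat set" and f z
    by (induction S rule: infinite_finite_induct) (auto simp: m0L addL)
  have sumR: "mult z (\<Sum>j\<in>S. f j) = (\<Sum>j\<in>S. mult z (f j))" for S :: "nat set" and f z
    by (induction S rule: infinite_finite_induct) (auto simp: m0R addR)
  define L where "L c = (\<Sum>j=1..n. scale (c j) (h j))" for c
  define T where "T c = (\<lambda>k. \<Sum>j=1..n. c j * A j k)" for c
  define B where "B c = (\<Sum>j=1..n. c j * b j)" for c
  have Lr: "mult (L c) r = L (T c) + scale (B c) r" for c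
  proof -
    have "mult (L c) r = (\<Sum>j=1..n. scale (c j) (mult (h j) r))"
      unfolding L_def by (simp add: sumL scL)
    also have "\<dots> = (\<Sum>j=1..n. (\<Sum>k=1..n. scale (c j * A j k) (h k)) + scale (c j * b j) r)"
      by (rule sum.cong) (auto simp: hr vs.scale_right_distrib vs.scale_sum_right)
    also have "\<dots> = (\<Sum>j=1..n. \<Sum>k=1..n. scale (c j * A j k) (h k)) + scale (B c) r"
      by (simp add: sum.distrib B_def vs.scale_sum_left)
    also have "(\<Sum>j=1..n. \<Sum>k=1..n. scale (c j * A j k) (h k)) = L (T c)"
      unfolding L_def T_def by (subst sum.swap) (simp add: vs.scale_sum_left)
    finally show ?thesis .
  qed
  have rL: "mult r (L c) = L (T c) + scale (B c) r" for c
  proof -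
    have "mult r (L c) = (\<Sum>j=1..n. scale (c j) (mult r (h j)))"
      unfolding L_def by (simp add: sumR scR)
    also have "\<dots> = (\<Sum>j=1..n. scale (c j) (mult (h j) r))"
      by (rule sum.cong) (auto simp: hr rh)
    also have "\<dots> = mult (L c) r"
      unfolding L_def by (simp add: sumL scL)
    finally show ?thesis using Lr by simp
  qed
  have LL: "mult (L c) (L d) = 0" for c d
    unfolding L_def by (simp add: sumL sumR scL scR hh)
  have step: "mult (L c + scale s r) r = L (T c) + scale (B c) r" for c s
    by (simp add: addL scL rr Lr)
  have sq: "mult (L c + scale s r) (L c + scale s r) = scale (2 * s) (L (T c) + scale (B c) r)" for c s
  proof -
    have "mult (L c + scale s r) (L c + scale s r) = scale s (mult (L c) r) + scale s (mult r (L c))"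
      by (simp add: addL addR scL scR LL rr)
    also have "\<dots> = scale (s + s) (L (T c) + scale (B c) r)"
      by (simp only: Lr rL vs.scale_left_distrib)
    finally show ?thesis by (simp only: mult_2)
  qed
  have mv: "matpow_vec scale n A m h i = L (matpow n A m i)" for m i
    unfolding matpow_vec_def L_def by simp
  have ms: "matpow_scal n A m b i = B (matpow n A m i)" for m i
    unfolding matpow_scal_def B_def by simp
  have mT: "matpow n A (Suc m) i = T (matpow n A m i)" for m i
    unfolding T_def by auto
  have h0: "h i = L (matpow n A 0 i)" if "i \<in> {1..n}" for i
  proof -
    have "L (matpow n A 0 i) = (\<Sum>j\<in>{1..n}. if j = i then h i else 0)"
      unfolding L_def by (rule sum.cong) auto
    also have "\<dots> = h i" using that by (simp add: sum.delta)
    finally show ?thesis by simp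
  qed
  have b0: "B (matpow n A 0 i) = b i" if "i \<in> {1..n}" for i
  proof -
    have "B (matpow n A 0 i) = (\<Sum>j\<in>{1..n}. if j = i then b i else 0)"
      unfolding B_def by (rule sum.cong) auto
    also have "\<dots> = b i" using that by (simp add: sum.delta)
    finally show ?thesis .
  qed
  have part1: "((\<lambda>x. mult x r) ^^ Suc m) (h i) = L (matpow n A (Suc m) i) + scale (B (matpow n A m i)) r"
    if "i \<in> {1..n}" for m i
  proof (induction m)
    case 0
    have "((\<lambda>x. mult x r) ^^ Suc 0) (h i) = mult (L (matpow n A 0 i)) r"
      using h0[OF that] by simp
    then show ?case using Lr mT by (simp del: matpow.simps)
  next
    case (Suc m)
    then show ?case using step mT by (simp del: matpow.simps)
  qed
  have part2: "plenary mult (mult (h i) r) (Suc m) = scale (gamma n A b i (Suc m))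
      (L (matpow n A (Suc (Suc m)) i) + scale (B (matpow n A (Suc m) i)) r)"
    if "i \<in> {1..n}" for m i
  proof (induction m)
    case 0
    have x: "mult (h i) r = L (matpow n A (Suc 0) i) + scale (b i) r"
      using h0[OF that] Lr mT b0[OF that] by (simp del: matpow.simps)
    show ?case by (simp add: x sq mT del: matpow.simps)
  next
    case (Suc m)
    have e: "plenary mult (mult (h i) r) (Suc (Suc m)) = mult (plenary mult (mult (h i) r) (Suc m)) (plenary mult (mult (h i) r) (Suc m))"
      by (simp only: plenary.simps)
    show ?case unfolding e Suc by (simp add: scL scR sq mT ms power2_eq_square mult.assoc mult.left_commute del: matpow.simps)
  qed
  show ?thesis
  proof (intro allI impI ballI)
    fix m :: nat and i assume m: "1 \<le> m" and i: "i \<in> {1..n}"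
    then obtain k where k: "m = Suc k" by (cases m) auto
    show "((\<lambda>x. mult x r) ^^ m) (h i)
             = matpow_vec scale n A m h i + scale (matpow_scal n A (m - 1) b i) r
         \<and> plenary mult (mult (h i) r) m
             = scale (gamma n A b i m)
                 (matpow_vec scale n A (m + 1) h i + scale (matpow_scal n A m b i) r)"
      using part1[OF i, of k] part2[OF i, of k] by (simp add: k mv ms)
  qed
qed

end
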